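(* Let $X$ be a finite $T_0$ topological space, $\mathcal V$ a multivector field on $X$, and $\gamma$ an essential solution in $X$. Then there exist an essential solution $\rho$ in $\alpha(\gamma)$ with $\operatorname{im}\rho=\alpha(\gamma)$ and an essential solution $\rho'$ in $\omega(\gamma)$ with $\operatorname{im}\rho'=\omega(\gamma)$.
   Context: Notation: $\operatorname{cl}$ is closure; $A\subset X$ is locally closed if $\operatorname{cl}A\setminus A$ is closed. A multivector field $\mathcal V$ on $X$ is a partition of $X$ into locally closed sets (multivectors); $[x]_{\mathcal V}$ is the multivector containing $x$. A multivector $V$ is critical if $H(\operatorname{cl}V,\operatorname{cl}V\setminus V)$ (relative singular homology) is nontrivial, regular otherwise. $A$ is $\mathcal V$-compatible if it is a union of multivectors; $\langle A\rangle_{\mathcal V}$ is the smallest locally closed $\mathcal V$-compatible set containing $A$. $\Pi_{\mathcal V}(x)=\operatorname{cl}\{x\}\cup[x]_{\mathcal V}$. A solution is a partial map $\gamma:\mathbb Z\nrightarrow X$ with domain an integer interval and $\gamma(t+1)\in\Pi_{\mathcal V}(\gamma(t))$; a full solution has domain $\mathbb Z$. $\alpha(\gamma)=\langle\bigcap_{t\le0}\gamma((-\infty,t])\rangle_{\mathcal V}$, $\omega(\gamma)=\langle\bigcap_{t\ge0}\gamma([t,\infty))\rangle_{\mathcal V}$. A full solution is essential unless $\alpha(\gamma)$ or $\omega(\gamma)$ is contained in a single regular multivector; an essential solution in $A$ is an essential full solution with image in $A$. *)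

theory Defs
  imports "HOL-Analysis.Analysis" "HOL-Homology.Homology"
begin

definition loc_closed_in :: "'a topology \<Rightarrow> 'a set \<Rightarrow> bool" where
  "loc_closed_in X A \<longleftrightarrow> A \<subseteq> topspace X \<and> closedin X (X closure_of A - A)"

definition multivector_field :: "'a topology \<Rightarrow> 'a set set \<Rightarrow> bool" where
  "multivector_field X V \<longleftrightarrow>
     (\<Union>V = topspace X) \<and> (\<forall>W\<in>V. W \<noteq> {} \<and> loc_closed_in X W) \<and>
     (\<forall>W1\<in>V. \<forall>W2\<in>V. W1 \<noteq> W2 \<longrightarrow> W1 \<inter> W2 = {})"

definition mv_of :: "'a set set \<Rightarrow> 'a \<Rightarrow> 'a set" where
  "mv_of V x = (THE W. W \<in> V \<and> x \<in> W)"

definition critical_mv :: "'a topology \<Rightarrow> 'a set \<Rightarrow> bool" where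
  "critical_mv X W \<longleftrightarrow>
     (\<exists>p. \<not> trivial_group
            (relative_homology_group p (subtopology X (X closure_of W)) (X closure_of W - W)))"

definition regular_mv :: "'a topology \<Rightarrow> 'a set \<Rightarrow> bool" where
  "regular_mv X W \<longleftrightarrow> \<not> critical_mv X W"

definition compatible :: "'a set set \<Rightarrow> 'a set \<Rightarrow> bool" where
  "compatible V A \<longleftrightarrow> (\<forall>x\<in>A. mv_of V x \<subseteq> A)"

definition lc_hull :: "'a topology \<Rightarrow> 'a set set \<Rightarrow> 'a set \<Rightarrow> 'a set" where
  "lc_hull X V A = (THE B. A \<subseteq> B \<and> loc_closed_in X B \<and> compatible V B \<and>
       (\<forall>C. A \<subseteq> C \<and> loc_closed_in X C \<and> compatible V C \<longrightarrow> B \<subseteq> C))"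

definition Pi_mv :: "'a topology \<Rightarrow> 'a set set \<Rightarrow> 'a \<Rightarrow> 'a set" where
  "Pi_mv X V x = X closure_of {x} \<union> mv_of V x"

definition full_solution_in :: "'a topology \<Rightarrow> 'a set set \<Rightarrow> 'a set \<Rightarrow> (int \<Rightarrow> 'a) \<Rightarrow> bool" where
  "full_solution_in X V A \<gamma> \<longleftrightarrow> (\<forall>t. \<gamma> t \<in> A \<and> \<gamma> (t + 1) \<in> Pi_mv X V (\<gamma> t))"

definition alpha_limit :: "'a topology \<Rightarrow> 'a set set \<Rightarrow> (int \<Rightarrow> 'a) \<Rightarrow> 'a set" where
  "alpha_limit X V \<gamma> = lc_hull X V (\<Inter>t\<in>{..0}. \<gamma> ` {..t})"

definition omega_limit :: "'a topology \<Rightarrow> 'a set set \<Rightarrow> (int \<Rightarrow> 'a) \<Rightarrow> 'a set" where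
  "omega_limit X V \<gamma> = lc_hull X V (\<Inter>t\<in>{0..}. \<gamma> ` {t..})"

definition essential :: "'a topology \<Rightarrow> 'a set set \<Rightarrow> (int \<Rightarrow> 'a) \<Rightarrow> bool" where
  "essential X V \<gamma> \<longleftrightarrow>
     \<not> (\<exists>W\<in>V. regular_mv X W \<and> alpha_limit X V \<gamma> \<subseteq> W) \<and>
     \<not> (\<exists>W\<in>V. regular_mv X W \<and> omega_limit X V \<gamma> \<subseteq> W)"

definition essential_solution_in :: "'a topology \<Rightarrow> 'a set set \<Rightarrow> 'a set \<Rightarrow> (int \<Rightarrow> 'a) \<Rightarrow> bool" where
  "essential_solution_in X V A \<gamma> \<longleftrightarrow> full_solution_in X V A \<gamma> \<and> essential X V \<gamma>"

end

theory Submission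
  imports Defs
begin



lemma loc_closed_iff:
  "loc_closed_in X S \<longleftrightarrow> (\<exists>U C. openin X U \<and> closedin X C \<and> S = U \<inter> C)"
proof
  assume a: "loc_closed_in X S"
  hence s: "S \<subseteq> topspace X" and c: "closedin X (X closure_of S - S)" by (auto simp: loc_closed_in_def)
  have e: "S = (topspace X - (X closure_of S - S)) \<inter> X closure_of S"
    using closure_of_subset[OF s] s by auto
  have o: "openin X (topspace X - (X closure_of S - S))" by (rule openin_diff[OF openin_topspace c])
  show "\<exists>U C. openin X U \<and> closedin X C \<and> S = U \<inter> C"
    by (intro exI conjI, rule o, rule closedin_closure_of, rule e)
next
  assume "\<exists>U C. openin X U \<and> closedin X C \<and> S = U \<inter> C"
  then obtain U C where u: "openin X U" and c: "closedin X C" and s: "S = U \<inter> C" by blast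
  have st: "S \<subseteq> topspace X" using s openin_subset[OF u] by blast
  have cl: "X closure_of S \<subseteq> C" using s c by (simp add: closure_of_minimal)
  have "X closure_of S - S = X closure_of S \<inter> (topspace X - U)"
    using cl s closure_of_subset_topspace[of X S] by blast
  moreover have "closedin X (X closure_of S \<inter> (topspace X - U))" by (rule closedin_Int[OF closedin_closure_of closedin_diff[OF closedin_topspace u]])
  ultimately show "loc_closed_in X S" using st by (simp add: loc_closed_in_def)
qed

lemma loc_closed_Int:
  "loc_closed_in X S \<Longrightarrow> loc_closed_in X T \<Longrightarrow> loc_closed_in X (S \<inter> T)"
proof -
  assume "loc_closed_in X S" "loc_closed_in X T"
  then obtain U C U' C' where "openin X U" "closedin X C" "S = U \<inter> C"
     "openin X U'" "closedin X C'" "T = U' \<inter> C'" by (meson loc_closed_iff)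
  hence o: "openin X (U \<inter> U')" and c: "closedin X (C \<inter> C')" and e: "S \<inter> T = (U \<inter> U') \<inter> (C \<inter> C')" by auto
  show ?thesis unfolding loc_closed_iff
    by (intro exI conjI, rule o, rule c, rule e)
qed

lemma loc_closed_Inter:
  "finite F \<Longrightarrow> F \<noteq> {} \<Longrightarrow> \<forall>S\<in>F. loc_closed_in X S \<Longrightarrow> loc_closed_in X (\<Inter>F)"
proof (induction F rule: finite_ne_induct)
  case (singleton x) then show ?case by simp
next
  case (insert x F) then show ?case using loc_closed_Int by auto
qed

lemma mv_of_prop:
  assumes "multivector_field X V" "x \<in> topspace X"
  shows "mv_of V x \<in> V \<and> x \<in> mv_of V x"
proof -
  obtain W where w: "W \<in> V" "x \<in> W" using assms unfolding multivector_field_def by blast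
  have "(THE W. W \<in> V \<and> x \<in> W) = W"
  proof (rule the_equality)
    show "W \<in> V \<and> x \<in> W" using w by simp
    fix W' assume "W' \<in> V \<and> x \<in> W'"
    thus "W' = W" using w assms(1) unfolding multivector_field_def by blast
  qed
  thus ?thesis using w by (simp add: mv_of_def)
qed

lemma mv_of_eq:
  assumes "multivector_field X V" "x \<in> topspace X" "y \<in> mv_of V x"
  shows "mv_of V y = mv_of V x"
proof -
  have a: "mv_of V x \<in> V" "x \<in> mv_of V x" using mv_of_prop[OF assms(1,2)] by auto
  have yt: "y \<in> topspace X" using a assms(1,3) unfolding multivector_field_def by blast
  have b: "mv_of V y \<in> V" "y \<in> mv_of V y" using mv_of_prop[OF assms(1) yt] by auto
  have d: "\<forall>W1\<in>V. \<forall>W2\<in>V. W1 \<noteq> W2 \<longrightarrow> W1 \<inter> W2 = {}" using assms(1) unfolding multivector_field_def by blast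
  show ?thesis
  proof (rule ccontr)
    assume "mv_of V y \<noteq> mv_of V x"
    hence "mv_of V y \<inter> mv_of V x = {}" using d a b by blast
    thus False using b assms(3) by blast
  qed
qed

definition hull_spec where
  "hull_spec X V A B \<longleftrightarrow> A \<subseteq> B \<and> loc_closed_in X B \<and> compatible V B \<and>
       (\<forall>C. A \<subseteq> C \<and> loc_closed_in X C \<and> compatible V C \<longrightarrow> B \<subseteq> C)"

lemma lc_hull_eq: "hull_spec X V A B \<Longrightarrow> lc_hull X V A = B"
  unfolding lc_hull_def hull_spec_def
  by (rule the_equality) (auto intro: antisym)

lemma hull_exists:
  assumes fin: "finite (topspace X)" and mv: "multivector_field X V" and A: "A \<subseteq> topspace X"
  shows "hull_spec X V A (lc_hull X V A)"
proof -
  define Cs where "Cs = {C. A \<subseteq> C \<and> loc_closed_in X C \<and> compatible V C}"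
  have top: "topspace X \<in> Cs" unfolding Cs_def using A
  proof (simp, intro conjI)
    show "loc_closed_in X (topspace X)" by (simp add: loc_closed_in_def)
    show "compatible V (topspace X)" unfolding compatible_def
    proof
      fix x assume "x \<in> topspace X"
      hence "mv_of V x \<in> V" using mv_of_prop[OF mv] by blast
      thus "mv_of V x \<subseteq> topspace X" using mv unfolding multivector_field_def by blast
    qed
  qed
  have finC: "finite Cs"
    by (rule finite_subset[of _ "Pow (topspace X)"]) (auto simp: Cs_def loc_closed_in_def fin)
  have "hull_spec X V A (\<Inter>Cs)"
    unfolding hull_spec_def
  proof (intro conjI allI impI)
    show "A \<subseteq> \<Inter>Cs" by (auto simp: Cs_def)
    show "loc_closed_in X (\<Inter>Cs)" using loc_closed_Inter[OF finC] top by (auto simp: Cs_def)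
    show "compatible V (\<Inter>Cs)" by (auto simp: Cs_def compatible_def)
    fix C assume "A \<subseteq> C \<and> loc_closed_in X C \<and> compatible V C"
    thus "\<Inter>Cs \<subseteq> C" by (auto simp: Cs_def)
  qed
  thus ?thesis using lc_hull_eq by metis
qed



lemma walk_exists:
  assumes "(x,y) \<in> E\<^sup>*" "E \<subseteq> H \<times> H" "x \<in> H"
  shows "\<exists>w. w \<noteq> [] \<and> hd w = x \<and> last w = y \<and> successively (\<lambda>a b. (a,b) \<in> E) w \<and> set w \<subseteq> H"
  using assms(1)
proof (induction rule: rtrancl_induct)
  case base then show ?case using assms(3) by (intro exI[of _ "[x]"]) auto
next
  case (step y z)
  then obtain w where w: "w \<noteq> []" "hd w = x" "last w = y" "successively (\<lambda>a b. (a,b) \<in> E) w" "set w \<subseteq> H" by blast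
  have "z \<in> H" using step(2) assms(2) by blast
  then show ?case using w step(2)
    by (intro exI[of _ "w @ [z]"]) (auto simp: successively_append_iff)
qed

lemma cycle_exists:
  assumes fin: "finite F" and FH: "F \<subseteq> H" and EH: "E \<subseteq> H \<times> H" and a0: "a0 \<in> H"
    and refl: "\<And>x. x \<in> H \<Longrightarrow> (x,x) \<in> E"
    and conn: "\<And>x y. x \<in> H \<Longrightarrow> y \<in> H \<Longrightarrow> (x,y) \<in> E\<^sup>*"
  shows "\<exists>w. w \<noteq> [] \<and> hd w = a0 \<and> last w = a0 \<and> successively (\<lambda>a b. (a,b) \<in> E) w \<and> set w \<subseteq> H \<and> F \<subseteq> set w"
  using fin FH
proof (induction F rule: finite_induct)
  case empty then show ?case using a0 by (intro exI[of _ "[a0]"]) auto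
next
  case (insert x F)
  then obtain w where w: "w \<noteq> []" "hd w = a0" "last w = a0" "successively (\<lambda>a b. (a,b) \<in> E) w" "set w \<subseteq> H" "F \<subseteq> set w" by auto
  have xH: "x \<in> H" using insert by auto
  obtain w1 where w1: "w1 \<noteq> []" "hd w1 = a0" "last w1 = x" "successively (\<lambda>a b. (a,b) \<in> E) w1" "set w1 \<subseteq> H"
    using walk_exists[OF conn[OF a0 xH] EH a0] by blast
  obtain w2 where w2: "w2 \<noteq> []" "hd w2 = x" "last w2 = a0" "successively (\<lambda>a b. (a,b) \<in> E) w2" "set w2 \<subseteq> H"
    using walk_exists[OF conn[OF xH a0] EH xH] by blast
  have "x \<in> set w2" using w2(1,2) by (metis hd_in_set)
  then show ?case using w w1 w2 refl[OF a0] refl[OF xH]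
    by (intro exI[of _ "w @ w1 @ w2"]) (auto simp: successively_append_iff)
qed

lemma periodic_solution:
  assumes fin: "finite H" and ne: "H \<noteq> {}" and EH: "E \<subseteq> H \<times> H"
    and refl: "\<And>x. x \<in> H \<Longrightarrow> (x,x) \<in> E"
    and conn: "\<And>x y. x \<in> H \<Longrightarrow> y \<in> H \<Longrightarrow> (x,y) \<in> E\<^sup>*"
  shows "\<exists>\<rho>::int\<Rightarrow>'a. (\<forall>t. (\<rho> t, \<rho> (t+1)) \<in> E) \<and> (\<forall>t. \<rho> ` {..t} = H) \<and> (\<forall>t. \<rho> ` {t..} = H)"
proof -
  obtain a0 where a0: "a0 \<in> H" using ne by blast
  obtain w where w: "w \<noteq> []" "hd w = a0" "last w = a0" "successively (\<lambda>a b. (a,b) \<in> E) w" "set w = H"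
    using cycle_exists[OF fin order_refl EH a0 refl conn] by blast
  define n where "n = length w"
  have n0: "n > 0" using w(1) by (simp add: n_def)
  define \<rho> where "\<rho> t = w ! nat (t mod int n)" for t
  have idx: "nat (t mod int n) < n" for t using n0
    by (simp add: nat_less_iff)
  have step: "(\<rho> t, \<rho> (t+1)) \<in> E" for t
  proof (cases "nat (t mod int n) + 1 < n")
    case True
    have k0: "0 \<le> t mod int n" using n0 by simp
    have k1: "t mod int n + 1 < int n" using True k0 by linarith
    have "(t + 1) mod int n = (t mod int n + 1) mod int n" by (simp add: mod_add_left_eq)
    also have "\<dots> = t mod int n + 1" using k0 k1 by (intro mod_pos_pos_trivial) auto
    finally have "(t + 1) mod int n = t mod int n + 1" .
    hence "nat ((t+1) mod int n) = Suc (nat (t mod int n))" using n0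
      by (simp add: nat_add_distrib)
    then show ?thesis using successively_nth[OF w(4), of "nat (t mod int n)"] True
      by (simp add: \<rho>_def n_def)
  next
    case False
    hence k: "nat (t mod int n) = n - 1" using idx[of t] by linarith
    have k0: "0 \<le> t mod int n" using n0 by simp
    have km: "t mod int n = int n - 1" using k k0 n0 by linarith
    have "(t + 1) mod int n = (t mod int n + 1) mod int n" by (simp add: mod_add_left_eq)
    also have "\<dots> = 0" using km by simp
    finally have "(t + 1) mod int n = 0" .
    hence "\<rho> (t+1) = a0" using w(1,2) by (simp add: \<rho>_def hd_conv_nth)
    moreover have "\<rho> t = a0" using k w(1,3) by (simp add: \<rho>_def n_def last_conv_nth)
    ultimately show ?thesis using refl a0 by simp
  qed
  have rng: "\<rho> ` S = H" if hS: "\<And>i. i < n \<Longrightarrow> \<exists>s\<in>S. s mod int n = int i" for S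
  proof
    show "\<rho> ` S \<subseteq> H" using idx w(5) by (auto simp: \<rho>_def n_def)
    show "H \<subseteq> \<rho> ` S"
    proof
      fix h assume "h \<in> H"
      then obtain i where i: "i < n" "w ! i = h" using w(5) by (auto simp: in_set_conv_nth n_def)
      then obtain s where "s \<in> S" "s mod int n = int i" using hS by blast
      thus "h \<in> \<rho> ` S" using i by (auto simp: \<rho>_def intro!: image_eqI[of _ _ s])
    qed
  qed
  have past: "\<rho> ` {..t} = H" for t
  proof (rule rng)
    fix i assume i: "i < n"
    define s where "s = int i + int n * (- (\<bar>t\<bar> + 1))"
    have "s mod int n = int i mod int n" unfolding s_def by (metis mod_mult_self2)
    hence m: "s mod int n = int i" using i by simp
    have g0: "int n * \<bar>t\<bar> \<ge> 1 * \<bar>t\<bar>" using n0 by (intro mult_right_mono) auto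
    have g: "int n * (\<bar>t\<bar> + 1) \<ge> \<bar>t\<bar> + int n" using g0 by (simp add: algebra_simps)
    have "s = int i - int n * (\<bar>t\<bar> + 1)" unfolding s_def by (simp add: algebra_simps)
    hence "s \<le> t" using g i n0 by linarith
    thus "\<exists>s\<in>{..t}. s mod int n = int i" using m by blast
  qed
  have fut: "\<rho> ` {t..} = H" for t
  proof (rule rng)
    fix i assume i: "i < n"
    define s where "s = int i + int n * (\<bar>t\<bar> + 1)"
    have "s mod int n = int i mod int n" unfolding s_def by (metis mod_mult_self2)
    hence "s mod int n = int i" using i by simp
    moreover have "int n * (\<bar>t\<bar> + 1) \<ge> 1 * (\<bar>t\<bar> + 1)" using n0 by (intro mult_right_mono) auto
    hence "\<bar>t\<bar> + 1 \<le> int n * (\<bar>t\<bar> + 1)" by simp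
    hence "t \<le> s" using i n0 unfolding s_def by linarith
    ultimately show "\<exists>s\<in>{t..}. s mod int n = int i" by blast
  qed
  show ?thesis using step past fut by blast
qed



lemma hull_spec_self:
  "loc_closed_in X H \<Longrightarrow> compatible V H \<Longrightarrow> hull_spec X V H H"
  by (auto simp: hull_spec_def)

lemma main_lemma:
  assumes fin: "finite (topspace X)" and mv: "multivector_field X V"
    and At: "A \<subseteq> topspace X" and Ane: "A \<noteq> {}"
    and conn: "\<And>a a'. a \<in> A \<Longrightarrow> a' \<in> A \<Longrightarrow>
       (a,a') \<in> {(x,y). x \<in> A \<and> y \<in> A \<and> y \<in> Pi_mv X V x}\<^sup>*"
    and ness: "\<not>(\<exists>W\<in>V. regular_mv X W \<and> lc_hull X V A \<subseteq> W)"
  shows "\<exists>\<rho>. essential_solution_in X V (lc_hull X V A) \<rho> \<and> range \<rho> = lc_hull X V A"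
proof -
  define H where "H = lc_hull X V A"
  have hs: "hull_spec X V A H" unfolding H_def by (rule hull_exists[OF fin mv At])
  have AH: "A \<subseteq> H" and lcH: "loc_closed_in X H" and cpH: "compatible V H"
    and minH: "\<And>C. A \<subseteq> C \<Longrightarrow> loc_closed_in X C \<Longrightarrow> compatible V C \<Longrightarrow> H \<subseteq> C"
    using hs by (auto simp: hull_spec_def)
  have Ht: "H \<subseteq> topspace X" using lcH by (simp add: loc_closed_in_def)
  have finH: "finite H" using Ht fin finite_subset by blast
  obtain U C where U: "openin X U" and C: "closedin X C" and HUC: "H = U \<inter> C"
    using lcH[unfolded loc_closed_iff] by blast
  define E where "E = {(x,y). x \<in> H \<and> y \<in> H \<and> y \<in> Pi_mv X V x}"
  have EH: "E \<subseteq> H \<times> H" by (auto simp: E_def)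
  have refl: "(x,x) \<in> E" if "x \<in> H" for x
  proof -
    have "x \<in> topspace X" using that Ht by blast
    hence "x \<in> X closure_of {x}" using closure_of_subset[of "{x}" X] by auto
    thus ?thesis using that by (simp add: E_def Pi_mv_def)
  qed
  have down: "(x,y) \<in> E" if "x \<in> H" "y \<in> H" "y \<in> X closure_of {x}" for x y
    using that by (simp add: E_def Pi_mv_def)
  have inmv: "(x,y) \<in> E" if "x \<in> H" "y \<in> mv_of V x" for x y
  proof -
    have "y \<in> H" using cpH that unfolding compatible_def by blast
    thus ?thesis using that by (simp add: E_def Pi_mv_def)
  qed
  obtain a0 where a0: "a0 \<in> A" using Ane by blast
  have connA: "(a,a') \<in> E\<^sup>*" if "a \<in> A" "a' \<in> A" for a a'
  proof -
    have "{(x,y). x \<in> A \<and> y \<in> A \<and> y \<in> Pi_mv X V x} \<subseteq> E" using AH by (auto simp: E_def)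
    thus ?thesis using conn[OF that] rtrancl_mono by blast
  qed
  define R where "R = {y \<in> H. (a0,y) \<in> E\<^sup>*}"
  have RH: "R \<subseteq> H" by (auto simp: R_def)
  have finR: "finite R" using finH RH finite_subset by blast
  have clR: "X closure_of R = (\<Union>r\<in>R. X closure_of {r})"
  proof -
    have "R = \<Union>((\<lambda>r. {r}) ` R)" by blast
    hence "X closure_of R = X closure_of (\<Union>((\<lambda>r. {r}) ` R))" by simp
    also have "\<dots> = (\<Union>S\<in>(\<lambda>r. {r}) ` R. X closure_of S)" using finR by (intro closure_of_Union) auto
    finally show ?thesis by simp
  qed
  have eR: "R = U \<inter> (C \<inter> X closure_of R)"
  proof
    show "R \<subseteq> U \<inter> (C \<inter> X closure_of R)" using RH HUC Ht closure_of_subset[of R X] by blast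
    show "U \<inter> (C \<inter> X closure_of R) \<subseteq> R"
    proof
      fix z assume z: "z \<in> U \<inter> (C \<inter> X closure_of R)"
      then obtain r where r: "r \<in> R" "z \<in> X closure_of {r}" using clR by blast
      have zH: "z \<in> H" using z HUC by blast
      have "(r,z) \<in> E" using down[OF _ zH r(2)] r(1) RH by blast
      thus "z \<in> R" using r(1) zH by (auto simp: R_def)
    qed
  qed
  have cR: "closedin X (C \<inter> X closure_of R)" using C by (intro closedin_Int) auto
  have lcR: "loc_closed_in X R" unfolding loc_closed_iff
    by (intro exI conjI, rule U, rule cR, rule eR)
  have cpR: "compatible V R" unfolding compatible_def
  proof (intro ballI subsetI)
    fix y w assume y: "y \<in> R" and w: "w \<in> mv_of V y"
    have "(y,w) \<in> E" using inmv[OF _ w] y RH by blast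
    thus "w \<in> R" using y EH by (auto simp: R_def)
  qed
  have AR: "A \<subseteq> R" using connA[OF a0] AH by (auto simp: R_def)
  have HR: "H \<subseteq> R" using minH[OF AR lcR cpR] .
  define Q where "Q = {y \<in> H. (y,a0) \<in> E\<^sup>*}"
  define K where "K = {z \<in> topspace X. X closure_of {z} \<inter> Q = {}}"
  have finK: "finite K" using fin by (rule finite_subset[rotated]) (auto simp: K_def)
  have "K = (\<Union>z\<in>K. X closure_of {z})"
  proof
    show "K \<subseteq> (\<Union>z\<in>K. X closure_of {z})"
    proof
      fix z assume "z \<in> K"
      hence "z \<in> X closure_of {z}" using closure_of_subset[of "{z}" X] by (auto simp: K_def)
      thus "z \<in> (\<Union>z\<in>K. X closure_of {z})" using \<open>z \<in> K\<close> by blast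
    qed
    show "(\<Union>z\<in>K. X closure_of {z}) \<subseteq> K"
    proof
      fix w assume "w \<in> (\<Union>z\<in>K. X closure_of {z})"
      then obtain z where z: "z \<in> K" "w \<in> X closure_of {z}" by blast
      have wt: "w \<in> topspace X" using z(2) closure_of_subset_topspace[of X "{z}"] by blast
      have "X closure_of {w} \<subseteq> X closure_of {z}"
        using z(2) by (intro closure_of_minimal) auto
      thus "w \<in> K" using z(1) wt by (auto simp: K_def)
    qed
  qed
  moreover have "closedin X (\<Union>z\<in>K. X closure_of {z})"
    using finK by (intro closedin_Union) auto
  ultimately have cK: "closedin X K" by simp
  define Op where "Op = topspace X - K"
  have oO: "openin X Op" using cK by (simp add: Op_def openin_diff)
  have eQ: "Q = (U \<inter> Op) \<inter> C"
  proof
    show "Q \<subseteq> (U \<inter> Op) \<inter> C"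
    proof
      fix y assume y: "y \<in> Q"
      have yt: "y \<in> topspace X" using y Ht by (auto simp: Q_def)
      hence "y \<in> X closure_of {y}" using closure_of_subset[of "{y}" X] by auto
      hence "y \<notin> K" using y by (auto simp: K_def)
      thus "y \<in> (U \<inter> Op) \<inter> C" using y yt HUC by (auto simp: Q_def Op_def)
    qed
    show "(U \<inter> Op) \<inter> C \<subseteq> Q"
    proof
      fix z assume z: "z \<in> (U \<inter> Op) \<inter> C"
      have zH: "z \<in> H" using z HUC by blast
      have "z \<notin> K" "z \<in> topspace X" using z by (auto simp: Op_def)
      then obtain q where q: "q \<in> Q" "q \<in> X closure_of {z}" by (auto simp: K_def)
      have "(z,q) \<in> E" using down[OF zH _ q(2)] q(1) by (auto simp: Q_def)
      thus "z \<in> Q" using q(1) zH by (auto simp: Q_def)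
    qed
  qed
  have oQ: "openin X (U \<inter> Op)" using U oO by (intro openin_Int)
  have lcQ: "loc_closed_in X Q" unfolding loc_closed_iff
    by (intro exI conjI, rule oQ, rule C, rule eQ)
  have cpQ: "compatible V Q" unfolding compatible_def
  proof (intro ballI subsetI)
    fix y w assume y: "y \<in> Q" and w: "w \<in> mv_of V y"
    have yt: "y \<in> topspace X" using y Ht by (auto simp: Q_def)
    have wH: "w \<in> H" using cpH y w unfolding compatible_def Q_def by blast
    have "mv_of V w = mv_of V y" using mv_of_eq[OF mv yt w] .
    moreover have "y \<in> mv_of V y" using mv_of_prop[OF mv yt] by blast
    ultimately have "(w,y) \<in> E" using inmv[OF wH] by simp
    thus "w \<in> Q" using y wH by (auto simp: Q_def)
  qed
  have AQ: "A \<subseteq> Q" using connA[OF _ a0] AH by (auto simp: Q_def)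
  have HQ: "H \<subseteq> Q" using minH[OF AQ lcQ cpQ] .
  have connH: "(x,y) \<in> E\<^sup>*" if "x \<in> H" "y \<in> H" for x y
  proof -
    have "(x,a0) \<in> E\<^sup>*" using HQ that(1) by (auto simp: Q_def)
    moreover have "(a0,y) \<in> E\<^sup>*" using HR that(2) by (auto simp: R_def)
    ultimately show ?thesis by (rule rtrancl_trans)
  qed
  have Hne: "H \<noteq> {}" using AH Ane by blast
  obtain \<rho> :: "int \<Rightarrow> _" where st: "\<forall>t. (\<rho> t, \<rho> (t+1)) \<in> E"
    and pa: "\<forall>t. \<rho> ` {..t} = H" and fu: "\<forall>t. \<rho> ` {t..} = H"
    using periodic_solution[OF finH Hne EH refl connH] by blast
  have fs: "full_solution_in X V H \<rho>" using st by (auto simp: full_solution_in_def E_def)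
  have rng: "range \<rho> = H"
  proof
    show "range \<rho> \<subseteq> H" using fs by (auto simp: full_solution_in_def)
    show "H \<subseteq> range \<rho>" using pa by blast
  qed
  have hH: "lc_hull X V H = H" by (rule lc_hull_eq[OF hull_spec_self[OF lcH cpH]])
  have al: "alpha_limit X V \<rho> = H" using pa hH by (simp add: alpha_limit_def)
  have om: "omega_limit X V \<rho> = H" using fu hH by (simp add: omega_limit_def)
  have "essential X V \<rho>" using ness al om by (simp add: essential_def H_def)
  thus ?thesis using fs rng by (auto simp: essential_solution_in_def H_def)
qed



lemma walk_gamma:
  assumes fs: "full_solution_in X V S \<gamma>" and le: "s \<le> s'"
    and inA: "\<And>t. s \<le> t \<Longrightarrow> t \<le> s' \<Longrightarrow> \<gamma> t \<in> A"
  shows "(\<gamma> s, \<gamma> s') \<in> {(x,y). x \<in> A \<and> y \<in> A \<and> y \<in> Pi_mv X V x}\<^sup>*"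
proof -
  have "\<forall>k::nat. s + int k \<le> s' \<longrightarrow> (\<gamma> s, \<gamma> (s + int k)) \<in> {(x,y). x \<in> A \<and> y \<in> A \<and> y \<in> Pi_mv X V x}\<^sup>*"
  proof
    fix k :: nat
    show "s + int k \<le> s' \<longrightarrow> (\<gamma> s, \<gamma> (s + int k)) \<in> {(x,y). x \<in> A \<and> y \<in> A \<and> y \<in> Pi_mv X V x}\<^sup>*"
    proof (induction k)
      case 0 then show ?case by simp
    next
      case (Suc k)
      show ?case
      proof
        assume h: "s + int (Suc k) \<le> s'"
        hence ih: "(\<gamma> s, \<gamma> (s + int k)) \<in> {(x,y). x \<in> A \<and> y \<in> A \<and> y \<in> Pi_mv X V x}\<^sup>*"
          using Suc by simp
        have "\<gamma> (s + int k + 1) \<in> Pi_mv X V (\<gamma> (s + int k))"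
          using fs by (simp add: full_solution_in_def)
        moreover have "\<gamma> (s + int k) \<in> A" using h by (intro inA) auto
        moreover have "\<gamma> (s + int k + 1) \<in> A" using h by (intro inA) auto
        ultimately have "(\<gamma> (s + int k), \<gamma> (s + int k + 1)) \<in> {(x,y). x \<in> A \<and> y \<in> A \<and> y \<in> Pi_mv X V x}"
          by blast
        moreover have "s + int (Suc k) = s + int k + 1" by simp
        ultimately have "(\<gamma> (s + int k), \<gamma> (s + int (Suc k))) \<in> {(x,y). x \<in> A \<and> y \<in> A \<and> y \<in> Pi_mv X V x}"
          by metis
        thus "(\<gamma> s, \<gamma> (s + int (Suc k))) \<in> {(x,y). x \<in> A \<and> y \<in> A \<and> y \<in> Pi_mv X V x}\<^sup>*"
          by (rule rtrancl_into_rtrancl[OF ih])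
      qed
    qed
  qed
  hence all: "s + int (nat (s' - s)) \<le> s' \<longrightarrow> (\<gamma> s, \<gamma> (s + int (nat (s' - s)))) \<in> {(x,y). x \<in> A \<and> y \<in> A \<and> y \<in> Pi_mv X V x}\<^sup>*"
    by (rule spec)
  have k: "s + int (nat (s' - s)) = s'" using le by simp
  show ?thesis using all unfolding k by simp
qed

lemma eventually_alpha:
  fixes \<gamma> :: "int \<Rightarrow> 'a"
  assumes "finite (range \<gamma>)"
  shows "\<exists>T\<le>0. \<gamma> ` {..T} \<subseteq> (\<Inter>t\<in>{..0}. \<gamma> ` {..t})"
proof -
  define A where "A = (\<Inter>t\<in>{..0::int}. \<gamma> ` {..t})"
  define B where "B = range \<gamma> - A"
  have "\<forall>x\<in>B. \<exists>t\<le>0. x \<notin> \<gamma> ` {..t}" by (auto simp: B_def A_def)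
  then obtain f where f: "\<forall>x\<in>B. f x \<le> 0 \<and> x \<notin> \<gamma> ` {..f x}" using bchoice[of B "\<lambda>x t. t \<le> 0 \<and> x \<notin> \<gamma> ` {..t}"] by blast
  have finB: "finite B" using assms by (simp add: B_def)
  define T where "T = Min (insert 0 (f ` B))"
  have T0: "T \<le> 0" using finB by (simp add: T_def)
  have Tf: "T \<le> f x" if "x \<in> B" for x using finB that by (simp add: T_def)
  have "\<gamma> ` {..T} \<subseteq> A"
  proof
    fix y assume "y \<in> \<gamma> ` {..T}"
    then obtain s where s: "s \<le> T" "y = \<gamma> s" by auto
    show "y \<in> A"
    proof (rule ccontr)
      assume "y \<notin> A"
      hence yB: "y \<in> B" using s by (auto simp: B_def)
      have "s \<le> f y" using Tf[OF yB] s by simp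
      thus False using f yB s by auto
    qed
  qed
  thus ?thesis using T0 by (auto simp: A_def)
qed

lemma eventually_omega:
  fixes \<gamma> :: "int \<Rightarrow> 'a"
  assumes "finite (range \<gamma>)"
  shows "\<exists>T\<ge>0. \<gamma> ` {T..} \<subseteq> (\<Inter>t\<in>{0..}. \<gamma> ` {t..})"
proof -
  define A where "A = (\<Inter>t\<in>{0::int..}. \<gamma> ` {t..})"
  define B where "B = range \<gamma> - A"
  have "\<forall>x\<in>B. \<exists>t\<ge>0. x \<notin> \<gamma> ` {t..}" by (auto simp: B_def A_def)
  then obtain f where f: "\<forall>x\<in>B. f x \<ge> 0 \<and> x \<notin> \<gamma> ` {f x..}" using bchoice[of B "\<lambda>x t. t \<ge> 0 \<and> x \<notin> \<gamma> ` {t..}"] by blast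
  have finB: "finite B" using assms by (simp add: B_def)
  define T where "T = Max (insert 0 (f ` B))"
  have T0: "T \<ge> 0" using finB by (simp add: T_def)
  have Tf: "T \<ge> f x" if "x \<in> B" for x using finB that by (simp add: T_def)
  have "\<gamma> ` {T..} \<subseteq> A"
  proof
    fix y assume "y \<in> \<gamma> ` {T..}"
    then obtain s where s: "s \<ge> T" "y = \<gamma> s" by auto
    show "y \<in> A"
    proof (rule ccontr)
      assume "y \<notin> A"
      hence yB: "y \<in> B" using s by (auto simp: B_def)
      have "s \<ge> f y" using Tf[OF yB] s by simp
      thus False using f yB s by auto
    qed
  qed
  thus ?thesis using T0 by (auto simp: A_def)
qed

theorem proposition3p10:
  fixes X :: "'a topology" and V :: "'a set set" and \<gamma> :: "int \<Rightarrow> 'a"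
  assumes "finite (topspace X)" and "t0_space X"
    and "multivector_field X V"
    and "essential_solution_in X V (topspace X) \<gamma>"
  shows "(\<exists>\<rho>. essential_solution_in X V (alpha_limit X V \<gamma>) \<rho> \<and> range \<rho> = alpha_limit X V \<gamma>) \<and>
         (\<exists>\<rho>'. essential_solution_in X V (omega_limit X V \<gamma>) \<rho>' \<and> range \<rho>' = omega_limit X V \<gamma>)"
proof
  have fs: "full_solution_in X V (topspace X) \<gamma>" and ess: "essential X V \<gamma>"
    using assms(4) by (auto simp: essential_solution_in_def)
  have rt: "range \<gamma> \<subseteq> topspace X" using fs by (auto simp: full_solution_in_def)
  have finr: "finite (range \<gamma>)" using rt assms(1) finite_subset by blast
  show "\<exists>\<rho>. essential_solution_in X V (alpha_limit X V \<gamma>) \<rho> \<and> range \<rho> = alpha_limit X V \<gamma>"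
  proof -
    define A where "A = (\<Inter>t\<in>{..0::int}. \<gamma> ` {..t})"
    obtain T where T: "T \<le> 0" "\<gamma> ` {..T} \<subseteq> A" using eventually_alpha[OF finr] by (auto simp: A_def)
    have AT: "A \<subseteq> \<gamma> ` {..T}" using T(1) by (auto simp: A_def)
    have At: "A \<subseteq> topspace X" using AT rt by blast
    have Ane: "A \<noteq> {}" using T(2) by blast
    have conn: "(a,a') \<in> {(x,y). x \<in> A \<and> y \<in> A \<and> y \<in> Pi_mv X V x}\<^sup>*" if aA: "a \<in> A" "a' \<in> A" for a a'
    proof -
      obtain s' where s': "s' \<le> T" "a' = \<gamma> s'" using AT aA(2) by auto
      have "a \<in> \<gamma> ` {..s'-1}" using aA(1) s' T(1) by (auto simp: A_def)
      then obtain s where s: "s \<le> s' - 1" "a = \<gamma> s" by auto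
      have "(\<gamma> s, \<gamma> s') \<in> {(x,y). x \<in> A \<and> y \<in> A \<and> y \<in> Pi_mv X V x}\<^sup>*"
        using s s' T by (intro walk_gamma[OF fs]) auto
      thus ?thesis using s s' by simp
    qed
    have ness: "\<not>(\<exists>W\<in>V. regular_mv X W \<and> lc_hull X V A \<subseteq> W)"
      using ess by (simp add: essential_def alpha_limit_def A_def)
    show ?thesis using main_lemma[OF assms(1,3) At Ane conn ness]
      by (simp add: alpha_limit_def A_def)
  qed
  show "\<exists>\<rho>'. essential_solution_in X V (omega_limit X V \<gamma>) \<rho>' \<and> range \<rho>' = omega_limit X V \<gamma>"
  proof -
    define A where "A = (\<Inter>t\<in>{0::int..}. \<gamma> ` {t..})"
    obtain T where T: "T \<ge> 0" "\<gamma> ` {T..} \<subseteq> A" using eventually_omega[OF finr] by (auto simp: A_def)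
    have AT: "A \<subseteq> \<gamma> ` {T..}" using T(1) by (auto simp: A_def)
    have At: "A \<subseteq> topspace X" using AT rt by blast
    have Ane: "A \<noteq> {}" using T(2) by blast
    have conn: "(a,a') \<in> {(x,y). x \<in> A \<and> y \<in> A \<and> y \<in> Pi_mv X V x}\<^sup>*" if aA: "a \<in> A" "a' \<in> A" for a a'
    proof -
      obtain s where s: "s \<ge> T" "a = \<gamma> s" using AT aA(1) by auto
      have "a' \<in> \<gamma> ` {s+1..}" using aA(2) s T(1) by (auto simp: A_def)
      then obtain s' where s': "s' \<ge> s + 1" "a' = \<gamma> s'" by auto
      have "(\<gamma> s, \<gamma> s') \<in> {(x,y). x \<in> A \<and> y \<in> A \<and> y \<in> Pi_mv X V x}\<^sup>*"
        using s s' T by (intro walk_gamma[OF fs]) auto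
      thus ?thesis using s s' by simp
    qed
    have ness: "\<not>(\<exists>W\<in>V. regular_mv X W \<and> lc_hull X V A \<subseteq> W)"
      using ess by (simp add: essential_def omega_limit_def A_def)
    show ?thesis using main_lemma[OF assms(1,3) At Ane conn ness]
      by (simp add: omega_limit_def A_def)
  qed
qed

end
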